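(* Let $\rho$ be a congruence on a commutative semiring $A$. Then $\sqrt{\rho}$ is a congruence on $A$, and $(\sqrt{\rho})_+=\sqrt{\rho}$.
   Context: Semirings are commutative with $0$ and $1\neq0$, $0a=0$. A congruence is an equivalence relation $\rho$ on $A$ with $(a,b),(c,d)\in\rho\Rightarrow(a+c,b+d),(ac,bd)\in\rho$. Twisted product $(a,b)\ast(c,d)=(ac+bd,ad+bc)$, $(a,b)^{\ast1}=(a,b)$, $(a,b)^{\ast n}=(a,b)^{\ast(n-1)}\ast(a,b)$. For a relation $R$, $R_+=\{(a,b)\in A\times A:(a+c,b+c)\in R\ \text{for some}\ c\in A\}$. $\sqrt\rho=\{(a,b)\in A\times A:(a+c,b+c)^{\ast n}\in\rho\ \text{for some}\ c\in A,\ n\ge1\}$. *)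

theory Defs
  imports Main
begin

definition congruence :: "('a::comm_semiring_1 \<times> 'a) set \<Rightarrow> bool" where
  "congruence \<rho> \<longleftrightarrow> equiv UNIV \<rho> \<and>
     (\<forall>a b c d. (a, b) \<in> \<rho> \<longrightarrow> (c, d) \<in> \<rho> \<longrightarrow>
        (a + c, b + d) \<in> \<rho> \<and> (a * c, b * d) \<in> \<rho>)"

definition tw_prod :: "'a::comm_semiring_1 \<times> 'a \<Rightarrow> 'a \<times> 'a \<Rightarrow> 'a \<times> 'a" where
  "tw_prod p q = (fst p * fst q + snd p * snd q, fst p * snd q + snd p * fst q)"

text \<open>Twisted power: tw_pow p n is the (n+1)-fold twisted power, with
  tw_pow p 0 = p and tw_pow p (Suc n) = tw_prod (tw_pow p n) p.\<close>
fun tw_pow :: "'a::comm_semiring_1 \<times> 'a \<Rightarrow> nat \<Rightarrow> 'a \<times> 'a" where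
  "tw_pow p 0 = p"
| "tw_pow p (Suc n) = tw_prod (tw_pow p n) p"

definition plus_closure :: "('a::comm_semiring_1 \<times> 'a) set \<Rightarrow> ('a \<times> 'a) set" where
  "plus_closure R = {(a, b). \<exists>c. (a + c, b + c) \<in> R}"

definition cong_radical :: "('a::comm_semiring_1 \<times> 'a) set \<Rightarrow> ('a \<times> 'a) set" where
  "cong_radical \<rho> = {(a, b). \<exists>c n. tw_pow (a + c, b + c) n \<in> \<rho>}"

end

theory Submission
  imports Defs
begin

datatype 'a tw = TW 'a 'a

fun toP :: "'a tw \<Rightarrow> 'a \<times> 'a" where "toP (TW a b) = (a, b)"

instantiation tw :: (comm_semiring_1) comm_semiring_1
begin
fun plus_tw :: "'a tw \<Rightarrow> 'a tw \<Rightarrow> 'a tw" where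
  "plus_tw (TW a b) (TW c d) = TW (a + c) (b + d)"
fun times_tw :: "'a tw \<Rightarrow> 'a tw \<Rightarrow> 'a tw" where
  "times_tw (TW a b) (TW c d) = TW (a * c + b * d) (a * d + b * c)"
definition zero_tw :: "'a tw" where "zero_tw = TW 0 0"
definition one_tw :: "'a tw" where "one_tw = TW 1 0"
instance
proof
  fix x y z :: "'a tw"
  show "x + y + z = x + (y + z)" by (cases x; cases y; cases z) (simp add: ac_simps)
  show "x + y = y + x" by (cases x; cases y) (simp add: ac_simps)
  show "0 + x = x" by (cases x) (simp add: zero_tw_def)
  show "x * y * z = x * (y * z)" by (cases x; cases y; cases z) (simp add: algebra_simps)
  show "x * y = y * x" by (cases x; cases y) (simp add: algebra_simps)
  show "1 * x = x" by (cases x) (simp add: one_tw_def)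
  show "(x + y) * z = x * z + y * z" by (cases x; cases y; cases z) (simp add: algebra_simps)
  show "0 * x = 0" by (cases x) (simp add: zero_tw_def)
  show "x * 0 = 0" by (cases x) (simp add: zero_tw_def)
  show "(0::'a tw) \<noteq> 1" by (simp add: zero_tw_def one_tw_def)
qed
end

lemma sum_closed_gen:
  assumes "0 \<in> I" "\<And>x y. x \<in> I \<Longrightarrow> y \<in> I \<Longrightarrow> x + y \<in> I"
    "\<And>k. k \<in> S \<Longrightarrow> f k \<in> I" "finite S"
  shows "sum f S \<in> I"
  using assms(4,3) by (induction S rule: finite_induct) (auto intro: assms(1,2))

lemma pow_sum_ideal:
  fixes x y :: "'b::comm_semiring_1"
  assumes "0 \<in> I" "\<And>x y. x \<in> I \<Longrightarrow> y \<in> I \<Longrightarrow> x + y \<in> I"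
    "\<And>x y. x \<in> I \<Longrightarrow> x * y \<in> I"
    "x ^ m \<in> I" "y ^ n \<in> I"
  shows "(x + y) ^ (m + n) \<in> I"
proof -
  have "(x + y) ^ (m + n) = (\<Sum>k\<le>m+n. of_nat ((m+n) choose k) * x ^ k * y ^ (m + n - k))"
    by (rule binomial_ring)
  also have "\<dots> \<in> I"
  proof (rule sum_closed_gen[OF assms(1,2)])
    fix k assume k: "k \<in> {..m+n}"
    show "of_nat ((m+n) choose k) * x ^ k * y ^ (m + n - k) \<in> I"
    proof (cases "m \<le> k")
      case True
      then have "x ^ k = x ^ m * x ^ (k - m)" by (simp add: power_add[symmetric])
      then have "of_nat ((m+n) choose k) * x ^ k * y ^ (m + n - k)
          = x ^ m * (of_nat ((m+n) choose k) * x ^ (k - m) * y ^ (m + n - k))"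
        by (simp add: ac_simps)
      then show ?thesis using assms(3,4) by simp
    next
      case False
      then have "m + n - k = n + (m - k)" by simp
      then have "y ^ (m + n - k) = y ^ n * y ^ (m - k)"
        by (simp add: power_add)
      then have "of_nat ((m+n) choose k) * x ^ k * y ^ (m + n - k)
          = y ^ n * (of_nat ((m+n) choose k) * x ^ k * y ^ (m - k))"
        by (simp add: ac_simps)
      then show ?thesis using assms(3,5) by simp
    qed
  next
    show "finite {..m+n}" by simp
  qed
  finally show ?thesis .
qed

lemma tw_pow_eq: "tw_pow (a, b) n = toP (TW a b ^ Suc n)"
proof (induction n)
  case 0
  then show ?case by (simp add: one_tw_def)
next
  case (Suc n)
  obtain u v where uv: "TW a b ^ Suc n = TW u v" by (cases "TW a b ^ Suc n")
  have "TW a b ^ Suc (Suc n) = TW u v * TW a b" using uv by (simp add: mult.commute)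
  then show ?case using Suc uv by (simp add: tw_prod_def)
qed

context
  fixes \<rho> :: "('a::comm_semiring_1 \<times> 'a) set"
  assumes cg: "congruence \<rho>"
begin

definition "I = {x. toP x \<in> \<rho>}"

lemma rho_refl: "(a, a) \<in> \<rho>"
  using cg unfolding congruence_def equiv_def refl_on_def by auto

lemma rho_sym: "(a, b) \<in> \<rho> \<Longrightarrow> (b, a) \<in> \<rho>"
  using cg unfolding congruence_def equiv_def sym_def by auto

lemma rho_add: "(a, b) \<in> \<rho> \<Longrightarrow> (c, d) \<in> \<rho> \<Longrightarrow> (a + c, b + d) \<in> \<rho>"
  using cg unfolding congruence_def by auto

lemma rho_mult: "(a, b) \<in> \<rho> \<Longrightarrow> (c, d) \<in> \<rho> \<Longrightarrow> (a * c, b * d) \<in> \<rho>"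
  using cg unfolding congruence_def by auto

lemma I0: "0 \<in> I" by (simp add: I_def zero_tw_def rho_refl)

lemma Iadd: "x \<in> I \<Longrightarrow> y \<in> I \<Longrightarrow> x + y \<in> I"
  by (cases x; cases y) (auto simp: I_def rho_add)

lemma Imult: "x \<in> I \<Longrightarrow> x * y \<in> I"
proof (cases x; cases y)
  fix a b c d assume xI: "x \<in> I" and x: "x = TW a b" and y: "y = TW c d"
  have ab: "(a, b) \<in> \<rho>" using xI x by (simp add: I_def)
  have 1: "(a * c, b * c) \<in> \<rho>" using rho_mult[OF ab rho_refl] .
  have 2: "(b * d, a * d) \<in> \<rho>" using rho_mult[OF rho_sym[OF ab] rho_refl] .
  have "(a * c + b * d, b * c + a * d) \<in> \<rho>" using rho_add[OF 1 2] .
  then show "x * y \<in> I" using x y by (simp add: I_def ac_simps)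
qed

lemma rad_iff: "(a, b) \<in> cong_radical \<rho> \<longleftrightarrow> (\<exists>c n. TW (a + c) (b + c) ^ Suc n \<in> I)"
  by (simp add: cong_radical_def tw_pow_eq I_def)

lemma I_pow_Suc: "x ^ m \<in> I \<Longrightarrow> \<exists>n. x ^ Suc n \<in> I"
proof (cases m)
  case 0
  assume "x ^ m \<in> I"
  then have "1 \<in> I" using 0 by simp
  then have "x ^ Suc 0 \<in> I" using Imult[of 1 x] by simp
  then show ?thesis by blast
qed blast

lemma rad_trans_gen:
  assumes "(a, b) \<in> cong_radical \<rho>" "(c, d) \<in> cong_radical \<rho>"
  shows "(a + c, b + d) \<in> cong_radical \<rho>"
proof -
  obtain e n where en: "TW (a + e) (b + e) ^ Suc n \<in> I" using assms(1) rad_iff by blast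
  obtain f m where fm: "TW (c + f) (d + f) ^ Suc m \<in> I" using assms(2) rad_iff by blast
  have "(TW (a + e) (b + e) + TW (c + f) (d + f)) ^ (Suc n + Suc m) \<in> I"
    by (rule pow_sum_ideal[OF I0 Iadd Imult en fm])
  moreover have "TW (a + e) (b + e) + TW (c + f) (d + f) = TW (a + c + (e + f)) (b + d + (e + f))"
    by (simp add: ac_simps)
  ultimately have "TW (a + c + (e + f)) (b + d + (e + f)) ^ (Suc n + Suc m) \<in> I" by simp
  then show ?thesis using rad_iff I_pow_Suc by blast
qed

lemma rad_refl: "(a, a) \<in> cong_radical \<rho>"
  unfolding rad_iff by (rule exI[of _ 0], rule exI[of _ 0]) (simp add: I_def rho_refl)

lemma rad_trans:
  assumes "(a, b) \<in> cong_radical \<rho>" "(b, d) \<in> cong_radical \<rho>"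
  shows "(a, d) \<in> cong_radical \<rho>"
proof -
  have "(a + b, b + d) \<in> cong_radical \<rho>" by (rule rad_trans_gen[OF assms])
  then obtain e n where "TW (a + b + e) (b + d + e) ^ Suc n \<in> I" using rad_iff by blast
  then have "TW (a + (b + e)) (d + (b + e)) ^ Suc n \<in> I" by (simp add: ac_simps)
  then show ?thesis using rad_iff by blast
qed

definition swp :: "'a tw \<Rightarrow> 'a tw" where "swp x = (case x of TW a b \<Rightarrow> TW b a)"

lemma swp_mult: "swp x * y = swp (x * y)"
  by (cases x; cases y) (simp add: swp_def ac_simps)

lemma swp_pow: "swp x ^ n = (if even n then x ^ n else swp (x ^ n))"
proof (induction n)
  case 0 then show ?case by simp
next
  case (Suc n)
  have a: "swp x * swp y = x * y" for y
    by (cases x; cases y) (simp add: swp_def ac_simps)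
  show ?case
  proof (cases "even n")
    case True then show ?thesis using Suc by (simp add: swp_mult)
  next
    case False
    then have "swp x ^ Suc n = swp x * swp (x ^ n)" using Suc by simp
    also have "\<dots> = x ^ Suc n" using a by simp
    finally show ?thesis using False by simp
  qed
qed

lemma I_swp: "x \<in> I \<Longrightarrow> swp x \<in> I"
  by (cases x) (simp add: I_def swp_def rho_sym)

lemma rad_sym: "(a, b) \<in> cong_radical \<rho> \<Longrightarrow> (b, a) \<in> cong_radical \<rho>"
proof -
  assume "(a, b) \<in> cong_radical \<rho>"
  then obtain e n where en: "TW (a + e) (b + e) ^ Suc n \<in> I" using rad_iff by blast
  have "swp (TW (a + e) (b + e)) ^ Suc n \<in> I"
    using en I_swp by (simp only: swp_pow) auto
  then have "TW (b + e) (a + e) ^ Suc n \<in> I" by (simp add: swp_def)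
  then show ?thesis using rad_iff by blast
qed

lemma rad_scale: "(a, b) \<in> cong_radical \<rho> \<Longrightarrow> (a * c, b * c) \<in> cong_radical \<rho>"
proof -
  assume "(a, b) \<in> cong_radical \<rho>"
  then obtain e n where en: "TW (a + e) (b + e) ^ Suc n \<in> I" using rad_iff by blast
  have "(TW c 0 * TW (a + e) (b + e)) ^ Suc n \<in> I"
    using Imult[OF en, of "TW c 0 ^ Suc n"] by (simp only: power_mult_distrib mult.commute)
  moreover have "TW c 0 * TW (a + e) (b + e) = TW (a * c + e * c) (b * c + e * c)"
    by (simp add: algebra_simps)
  ultimately show ?thesis using rad_iff by auto
qed

lemma rad_congruence: "congruence (cong_radical \<rho>)"
  unfolding congruence_def equiv_def refl_on_def sym_def trans_def
proof (intro conjI allI impI)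
  show "cong_radical \<rho> \<subseteq> UNIV \<times> UNIV" by simp
  show "\<forall>x\<in>UNIV. (x, x) \<in> cong_radical \<rho>" using rad_refl by blast
  fix x y z assume "(x, y) \<in> cong_radical \<rho>"
  then show "(y, x) \<in> cong_radical \<rho>" by (rule rad_sym)
next
  fix x y z assume "(x, y) \<in> cong_radical \<rho>" "(y, z) \<in> cong_radical \<rho>"
  then show "(x, z) \<in> cong_radical \<rho>" by (rule rad_trans)
next
  fix a b c d assume "(a, b) \<in> cong_radical \<rho>" "(c, d) \<in> cong_radical \<rho>"
  then show "(a + c, b + d) \<in> cong_radical \<rho>" by (rule rad_trans_gen)
next
  fix a b c d assume ab: "(a, b) \<in> cong_radical \<rho>" and cd: "(c, d) \<in> cong_radical \<rho>"
  have 1: "(a * c, b * c) \<in> cong_radical \<rho>" using rad_scale[OF ab] .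
  have "(c * b, d * b) \<in> cong_radical \<rho>" using rad_scale[OF cd] .
  then have 2: "(b * c, b * d) \<in> cong_radical \<rho>" by (simp add: mult.commute)
  show "(a * c, b * d) \<in> cong_radical \<rho>" by (rule rad_trans[OF 1 2])
qed

lemma rad_plus: "plus_closure (cong_radical \<rho>) = cong_radical \<rho>"
proof
  show "cong_radical \<rho> \<subseteq> plus_closure (cong_radical \<rho>)"
    unfolding plus_closure_def by (auto intro: exI[of _ 0])
  show "plus_closure (cong_radical \<rho>) \<subseteq> cong_radical \<rho>"
  proof
    fix p assume "p \<in> plus_closure (cong_radical \<rho>)"
    then obtain a b c where p: "p = (a, b)" and "(a + c, b + c) \<in> cong_radical \<rho>"
      unfolding plus_closure_def by auto
    then obtain e n where "TW (a + c + e) (b + c + e) ^ Suc n \<in> I" using rad_iff by blast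
    then have "TW (a + (c + e)) (b + (c + e)) ^ Suc n \<in> I" by (simp add: ac_simps)
    then show "p \<in> cong_radical \<rho>" using rad_iff p by blast
  qed
qed

end

theorem proposition2p10:
  fixes \<rho> :: "('a::comm_semiring_1 \<times> 'a) set"
  assumes "congruence \<rho>"
  shows "congruence (cong_radical \<rho>) \<and> plus_closure (cong_radical \<rho>) = cong_radical \<rho>"
  using rad_congruence[OF assms] rad_plus[OF assms] by blast

end
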